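(* Let $P$ be a finite poset, $R$ a commutative unital ring, and $D$ a derivation of $I^3(P,R)$. Then $D(e_x)=0$ for all $x\in P$.
   Context: For a finite poset $P$, $P^3_\le=\{(x,y,z)\in P^3: x\le y\le z\}$, and $I^3(P,R)$ is the $R$-module of functions $f:P^3_\le\to R$ with multiplication $(fg)(x_1,x_2,x_3)=\sum f(x_1,y_1,y_2)g(y_1,y_2,x_3)$ over all $x_1\le y_1\le x_2\le y_2\le x_3$. $e_x\in I^3(P,R)$ is the function equal to $1$ at $(x,x,x)$ and $0$ elsewhere. A derivation is an $R$-linear map $D:I^3(P,R)\to I^3(P,R)$ with $D(fg)=D(f)g+fD(g)$. *)

theory Defs
  imports Main
begin

text \<open>The finite poset P is the type 'a of class order with finite UNIV.
Elements of I^3(P,R) are functions 'a => 'a => 'a => 'r vanishing off P^3_le.\<close>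

definition I3 :: "('a::order \<Rightarrow> 'a \<Rightarrow> 'a \<Rightarrow> 'r::comm_ring_1) set" where
  "I3 = {f. \<forall>x y z. \<not> (x \<le> y \<and> y \<le> z) \<longrightarrow> f x y z = 0}"

definition I3_mult :: "('a::{order,finite} \<Rightarrow> 'a \<Rightarrow> 'a \<Rightarrow> 'r::comm_ring_1)
     \<Rightarrow> ('a \<Rightarrow> 'a \<Rightarrow> 'a \<Rightarrow> 'r) \<Rightarrow> ('a \<Rightarrow> 'a \<Rightarrow> 'a \<Rightarrow> 'r)" where
  "I3_mult f g = (\<lambda>x1 x2 x3.
     \<Sum>(y1, y2) \<in> {(y1, y2). x1 \<le> y1 \<and> y1 \<le> x2 \<and> x2 \<le> y2 \<and> y2 \<le> x3}.
       f x1 y1 y2 * g y1 y2 x3)"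

definition I3_e :: "'a::order \<Rightarrow> ('a \<Rightarrow> 'a \<Rightarrow> 'a \<Rightarrow> 'r::comm_ring_1)" where
  "I3_e x = (\<lambda>a b c. if a = x \<and> b = x \<and> c = x then 1 else 0)"

definition I3_derivation :: "(('a::{order,finite} \<Rightarrow> 'a \<Rightarrow> 'a \<Rightarrow> 'r::comm_ring_1)
     \<Rightarrow> ('a \<Rightarrow> 'a \<Rightarrow> 'a \<Rightarrow> 'r)) \<Rightarrow> bool" where
  "I3_derivation D \<longleftrightarrow>
     (\<forall>f\<in>I3. D f \<in> I3) \<and>
     (\<forall>f\<in>I3. \<forall>g\<in>I3. D (\<lambda>x y z. f x y z + g x y z) = (\<lambda>x y z. D f x y z + D g x y z)) \<and>
     (\<forall>r. \<forall>f\<in>I3. D (\<lambda>x y z. r * f x y z) = (\<lambda>x y z. r * D f x y z)) \<and>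
     (\<forall>f\<in>I3. \<forall>g\<in>I3. D (I3_mult f g) = (\<lambda>x y z. I3_mult (D f) g x y z + I3_mult f (D g) x y z))"

end

theory Submission
  imports Defs
begin

definition EE :: "'a::order \<Rightarrow> 'a \<Rightarrow> 'a \<Rightarrow> ('a \<Rightarrow> 'a \<Rightarrow> 'a \<Rightarrow> 'r::comm_ring_1)" where
  "EE p q r = (\<lambda>a b c. if a = p \<and> b = q \<and> c = r then 1 else 0)"

lemma EE_I3: "p \<le> q \<Longrightarrow> q \<le> r \<Longrightarrow> EE p q r \<in> I3"
  unfolding EE_def I3_def by auto

lemma e_EE: "I3_e x = EE x x x"
  unfolding EE_def I3_e_def by simp

lemma L1:
  fixes f :: "'a::{order,finite} \<Rightarrow> 'a \<Rightarrow> 'a \<Rightarrow> 'r::comm_ring_1"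
  shows "I3_mult f (EE p q r) a b z =
    (if z = r \<and> a \<le> p \<and> p \<le> b \<and> b \<le> q \<and> q \<le> r then f a p q else 0)"
proof -
  let ?S = "{(y1, y2). a \<le> y1 \<and> y1 \<le> b \<and> b \<le> y2 \<and> y2 \<le> z}"
  have "I3_mult f (EE p q r) a b z = (\<Sum>k\<in>?S. if k = (p,q) then (if z = r then f a p q else 0) else 0)"
    unfolding I3_mult_def EE_def by (intro sum.cong) (auto split: if_splits)
  also have "\<dots> = (if (p,q) \<in> ?S then (if z = r then f a p q else 0) else 0)"
    by (subst sum.delta) auto
  finally show ?thesis by auto
qed

lemma L2:
  fixes g :: "'a::{order,finite} \<Rightarrow> 'a \<Rightarrow> 'a \<Rightarrow> 'r::comm_ring_1"
  shows "I3_mult (EE p q r) g a b z =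
    (if a = p \<and> p \<le> q \<and> q \<le> b \<and> b \<le> r \<and> r \<le> z then g q r z else 0)"
proof -
  let ?S = "{(y1, y2). a \<le> y1 \<and> y1 \<le> b \<and> b \<le> y2 \<and> y2 \<le> z}"
  have "I3_mult (EE p q r) g a b z = (\<Sum>k\<in>?S. if k = (q,r) then (if a = p then g q r z else 0) else 0)"
    unfolding I3_mult_def EE_def by (intro sum.cong) (auto split: if_splits)
  also have "\<dots> = (if (q,r) \<in> ?S then (if a = p then g q r z else 0) else 0)"
    by (subst sum.delta) auto
  finally show ?thesis by auto
qed

theorem lemma4p3:
  fixes D :: "('a::{order,finite} \<Rightarrow> 'a \<Rightarrow> 'a \<Rightarrow> 'r::comm_ring_1)
              \<Rightarrow> ('a \<Rightarrow> 'a \<Rightarrow> 'a \<Rightarrow> 'r)"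
  assumes "I3_derivation D"
  shows "\<forall>x. D (I3_e x) = (\<lambda>a b c. 0)"
proof
  fix x :: 'a
  have cl: "\<And>f. f \<in> I3 \<Longrightarrow> D f \<in> I3"
    and add: "\<And>f g. f \<in> I3 \<Longrightarrow> g \<in> I3 \<Longrightarrow> D (\<lambda>x y z. f x y z + g x y z) = (\<lambda>x y z. D f x y z + D g x y z)"
    and mul: "\<And>f g. f \<in> I3 \<Longrightarrow> g \<in> I3 \<Longrightarrow> D (I3_mult f g) = (\<lambda>x y z. I3_mult (D f) g x y z + I3_mult f (D g) x y z)"
    using assms unfolding I3_derivation_def by blast+
  have z0: "(\<lambda>a b c. 0::'r) \<in> I3" unfolding I3_def by simp
  have "D (\<lambda>a b c. 0 + 0) = (\<lambda>a b c. D (\<lambda>a b c. 0) a b c + D (\<lambda>a b c. 0) a b c)"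
    using add[OF z0 z0] by simp
  hence "D (\<lambda>a b c. 0) a b c = D (\<lambda>a b c. 0) a b c + D (\<lambda>a b c. 0) a b c" for a b c
    by (simp add: fun_eq_iff)
  hence D0: "D (\<lambda>a b c. 0) = (\<lambda>a b c. 0::'r)"
    by (intro ext) simp
  define e :: "'a \<Rightarrow> 'a \<Rightarrow> 'a \<Rightarrow> 'r" where "e = EE x x x"
  have eI: "e \<in> I3" unfolding e_def by (rule EE_I3) auto
  define d where "d = D e"
  have dI: "d \<in> I3" unfolding d_def using cl eI by blast
  have ee: "I3_mult e e = e"
    unfolding e_def fun_eq_iff L1 by (auto simp: EE_def)
  have deq: "d a b z = I3_mult d e a b z + I3_mult e d a b z" for a b z
  proof -
    have "D e = (\<lambda>x y z. I3_mult (D e) e x y z + I3_mult e (D e) x y z)"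
      using mul[OF eI eI] by (simp only: ee)
    thus ?thesis unfolding d_def by (simp add: fun_eq_iff)
  qed
  have dv: "d a b z = (if z = x \<and> a \<le> x \<and> x \<le> b \<and> b \<le> x then d a x x else 0)
      + (if a = x \<and> x \<le> b \<and> b \<le> x \<and> x \<le> z then d x x z else 0)" for a b z
    using deq[of a b z] unfolding e_def L1 L2 by simp
  have "d a b z = 0" for a b z
  proof (cases "a \<le> b \<and> b \<le> z")
    case False thus ?thesis using dI unfolding I3_def by auto
  next
    case True
    show ?thesis
    proof (cases "b = x")
      case False thus ?thesis using dv[of a b z] by auto
    next
      case bx: True
      show ?thesis
      proof (cases "a = x")
        case ax: True
        show ?thesis
        proof (cases "z = x")
          case True thus ?thesis using dv[of x x x] ax bx by simp
        next
          case zx: False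
          have xz: "x \<le> z" using True bx by simp
          define F :: "'a \<Rightarrow> 'a \<Rightarrow> 'a \<Rightarrow> 'r" where "F = EE x z z"
          have FI: "F \<in> I3" unfolding F_def using xz by (intro EE_I3) auto
          have "I3_mult e F = (\<lambda>a b c. 0)"
            unfolding e_def F_def fun_eq_iff L2 using zx by (auto simp: EE_def)
          hence "(\<lambda>a b c. 0) = (\<lambda>a b c. I3_mult d F a b c + I3_mult e (D F) a b c)"
            using mul[OF eI FI] D0 d_def by simp
          hence "0 = I3_mult d F x z z + I3_mult e (D F) x z z" by (simp add: fun_eq_iff)
          thus ?thesis unfolding F_def e_def L1 L2 using ax bx zx xz by auto
        qed
      next
        case ax: False
        show ?thesis
        proof (cases "z = x")
          case False thus ?thesis using dv[of a b z] ax bx by auto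
        next
          case zx: True
          have axl: "a \<le> x" using True bx by simp
          define G :: "'a \<Rightarrow> 'a \<Rightarrow> 'a \<Rightarrow> 'r" where "G = EE a a x"
          have GI: "G \<in> I3" unfolding G_def using axl by (intro EE_I3) auto
          have "I3_mult G e = (\<lambda>a b c. 0)"
            unfolding e_def G_def fun_eq_iff L1 using ax by (auto simp: EE_def)
          hence "(\<lambda>a b c. 0) = (\<lambda>a b c. I3_mult (D G) e a b c + I3_mult G d a b c)"
            using mul[OF GI eI] D0 d_def by simp
          hence "0 = I3_mult (D G) e a a x + I3_mult G d a a x" by (simp add: fun_eq_iff)
          thus ?thesis unfolding G_def e_def L1 L2 using ax bx zx axl by auto
        qed
      qed
    qed
  qed
  thus "D (I3_e x) = (\<lambda>a b c. 0)" unfolding e_EE d_def e_def by (auto simp: fun_eq_iff)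
qed

end
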